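(* Let $E\subset\Delta_n$ be a finite set and suppose the market weight sequence $\{\mu(t)\}_{t\ge0}$ takes values in $E$. Let $\Theta=(\overline{\Delta}_n)^E$ be the set of all portfolio maps $\pi:E\to\overline{\Delta}_n$, with the topology of uniform (equivalently pointwise) convergence. Suppose the empirical measures $\mathbb P_t$ converge weakly to a probability measure $\mathbb P$ on $E\times E$. Then for each $\pi\in\Theta$ the limit $W(\pi)=\lim_{t\to\infty}\frac1t\log V_\pi(t)$ exists and equals $\int_{E\times E}\ell_\pi\,d\mathbb P$. Moreover there exists $\pi^*\in\Theta$ with $W(\pi^* )=W^*:=\max_{\pi\in\Theta}W(\pi)$, and writing $\mathbb P(p,q)=\mathbb P_1(p)\mathbb P_2(q\mid p)$ with $\mathbb P_1$ the first marginal and $\mathbb P_2$ the conditional distribution, such a $\pi^*$ satisfies $\pi^*(p)\in\operatorname{argmax}_{x\in\overline{\Delta}_n}\int_E\log\left(x\cdot\frac{q}{p}\right)\mathbb P_2(dq\mid p)$ for every $p$ with $\mathbb P_1(p)>0$.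
   Context: $\Delta_n=\{p\in(0,1)^n:\sum_ip_i=1\}$, $\overline{\Delta}_n$ its closure in the hyperplane $\sum_ip_i=1$ ($n\ge2$). For a portfolio map $\pi$, the relative value is $V_\pi(0)=1$, $V_\pi(t+1)=V_\pi(t)\,\pi(\mu(t))\cdot\frac{\mu(t+1)}{\mu(t)}$, where $a\cdot b$ is the Euclidean inner product and $a/b$ the componentwise ratio. $\ell_\pi(p,q)=\log\left(\pi(p)\cdot\frac qp\right)$, and $\mathbb P_t=\frac1t\sum_{s=0}^{t-1}\delta_{(\mu(s),\mu(s+1))}$. *)

theory Defs
  imports "HOL-Analysis.Analysis" "HOL-Probability.Probability"
begin

definition open_simplex :: "(real^'n) set" where
  "open_simplex = {p. (\<forall>i. 0 < p $ i) \<and> sum (\<lambda>i. p $ i) UNIV = 1}"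

definition closed_simplex :: "(real^'n) set" where
  "closed_simplex = {p. (\<forall>i. 0 \<le> p $ i) \<and> sum (\<lambda>i. p $ i) UNIV = 1}"

definition vratio :: "real^'n \<Rightarrow> real^'n \<Rightarrow> real^'n" where
  "vratio a b = (\<chi> i. a $ i / b $ i)"

definition portfolio_maps :: "(real^'n) set \<Rightarrow> (real^'n \<Rightarrow> real^'n) set" where
  "portfolio_maps E = (E \<rightarrow>\<^sub>E closed_simplex)"

fun rel_value :: "(real^'n \<Rightarrow> real^'n) \<Rightarrow> (nat \<Rightarrow> real^'n) \<Rightarrow> nat \<Rightarrow> real" where
  "rel_value \<pi> \<mu> 0 = 1"
| "rel_value \<pi> \<mu> (Suc t) = rel_value \<pi> \<mu> t * (\<pi> (\<mu> t) \<bullet> vratio (\<mu> (Suc t)) (\<mu> t))"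

definition ell :: "(real^'n \<Rightarrow> real^'n) \<Rightarrow> real^'n \<Rightarrow> real^'n \<Rightarrow> real" where
  "ell \<pi> p q = ln (\<pi> p \<bullet> vratio q p)"

definition growth :: "(real^'n \<Rightarrow> real^'n) \<Rightarrow> (nat \<Rightarrow> real^'n) \<Rightarrow> real" where
  "growth \<pi> \<mu> = lim (\<lambda>t. ln (rel_value \<pi> \<mu> t) / real t)"

text \<open>Empirical measure P_t = (1/t) sum_{s<t} delta_(mu s, mu (s+1)) (meaningful for t >= 1).\<close>
definition emp_measure :: "(nat \<Rightarrow> real^'n) \<Rightarrow> nat \<Rightarrow> ((real^'n) \<times> (real^'n)) pmf" where
  "emp_measure \<mu> t = map_pmf (\<lambda>s. (\<mu> s, \<mu> (Suc s))) (pmf_of_set {..<t})"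

definition weak_conv_on :: "'a::topological_space set \<Rightarrow> (nat \<Rightarrow> 'a pmf) \<Rightarrow> 'a pmf \<Rightarrow> bool" where
  "weak_conv_on S Q R \<longleftrightarrow>
     (\<forall>f :: 'a \<Rightarrow> real. continuous_on S f \<and> bounded (f ` S) \<longrightarrow>
        (\<lambda>t. measure_pmf.expectation (Q t) f) \<longlonglongrightarrow> measure_pmf.expectation R f)"

definition cond_second :: "('a \<times> 'a) pmf \<Rightarrow> 'a \<Rightarrow> 'a pmf" where
  "cond_second P p = map_pmf snd (cond_pmf P {pq. fst pq = p})"

end

theory Submission
  imports Defs
begin

definition Gf :: "((real^'n) \<times> (real^'n)) pmf \<Rightarrow> (real^'n) set \<Rightarrow> real^'n \<Rightarrow> real^'n \<Rightarrow> real" where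
  "Gf P E p x = (\<Sum>q\<in>E. pmf P (p,q) * ln (x \<bullet> vratio q p))"

lemma pos_dot:
  assumes "x \<in> closed_simplex" "\<forall>i. 0 < v $ i"
  shows "0 < x \<bullet> v"
proof -
  have nn: "\<forall>i. 0 \<le> x $ i" and s: "(\<Sum>i\<in>UNIV. x $ i) = 1"
    using assms(1) by (auto simp: closed_simplex_def)
  then obtain j where j: "x $ j \<noteq> 0" by force
  hence "0 < x $ j * v $ j" using nn assms(2) by (simp add: order_less_le)
  also have "x $ j * v $ j \<le> (\<Sum>i\<in>UNIV. x $ i * v $ i)"
    by (rule member_le_sum) (use nn assms(2) in \<open>auto intro: mult_nonneg_nonneg less_imp_le\<close>)
  finally show ?thesis by (simp add: inner_vec_def)
qed

lemma vratio_pos: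
  assumes "p \<in> open_simplex" "q \<in> open_simplex"
  shows "\<forall>i. 0 < vratio q p $ i"
  using assms by (auto simp: open_simplex_def vratio_def)

lemma closed_simplex_compact: "compact (closed_simplex :: (real^'n) set)"
  unfolding compact_eq_bounded_closed
proof (intro conjI)
  have "closed_simplex = {p::real^'n. \<forall>i. 0 \<le> p $ i} \<inter> {p. (\<Sum>i\<in>UNIV. p $ i) = 1}"
    by (auto simp: closed_simplex_def)
  also have "closed \<dots>"
    by (intro closed_Int closed_Collect_all closed_Collect_le closed_Collect_eq continuous_intros)
  finally have "closed (closed_simplex :: (real^'n) set)" .
  show "bounded (closed_simplex :: (real^'n) set)"
  proof (rule boundedI[of _ 1])
    fix p :: "real^'n" assume p: "p \<in> closed_simplex"
    have "norm p \<le> (\<Sum>i\<in>UNIV. \<bar>p $ i\<bar>)" by (rule norm_le_l1_cart)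
    also have "\<dots> = 1" using p by (simp add: closed_simplex_def)
    finally show "norm p \<le> 1" .
  qed
  show "closed (closed_simplex :: (real^'n) set)" by fact
qed

lemma closed_simplex_ne: "(closed_simplex :: (real^'n) set) \<noteq> {}"
proof -
  have "(\<chi> i. 1 / real CARD('n)) \<in> (closed_simplex :: (real^'n) set)"
    by (simp add: closed_simplex_def)
  thus ?thesis by blast
qed

lemma ell_pos:
  assumes "\<pi> \<in> portfolio_maps E" "E \<subseteq> open_simplex" "p \<in> E" "q \<in> E"
  shows "0 < \<pi> p \<bullet> vratio q p"
proof -
  have "\<pi> p \<in> closed_simplex" using assms(1,3) by (auto simp: portfolio_maps_def)
  thus ?thesis using vratio_pos[of p q] assms(2-4) pos_dot by blast
qed

lemma rel_value_ln:
  assumes "\<pi> \<in> portfolio_maps E" "E \<subseteq> open_simplex" "\<forall>t. \<mu> t \<in> E"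
  shows "0 < rel_value \<pi> \<mu> t \<and> ln (rel_value \<pi> \<mu> t) = (\<Sum>s<t. ell \<pi> (\<mu> s) (\<mu> (Suc s)))"
proof (induction t)
  case 0 then show ?case by simp
next
  case (Suc t)
  have h: "0 < \<pi> (\<mu> t) \<bullet> vratio (\<mu> (Suc t)) (\<mu> t)"
    using ell_pos assms by blast
  then show ?case using Suc by (simp add: ln_mult ell_def)
qed

lemma emp_exp:
  "measure_pmf.expectation (emp_measure \<mu> (Suc t)) (f :: _ \<Rightarrow> real)
     = (\<Sum>s<Suc t. f (\<mu> s, \<mu> (Suc s))) / real (Suc t)"
  unfolding emp_measure_def integral_map_pmf
  by (subst integral_pmf_of_set) auto

lemma F_decomp:
  assumes "finite E" "set_pmf P \<subseteq> E \<times> E"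
  shows "measure_pmf.expectation P (\<lambda>(p, q). ell \<pi> p q) = (\<Sum>p\<in>E. Gf P E p (\<pi> p))"
proof -
  have "measure_pmf.expectation P (\<lambda>(p, q). ell \<pi> p q)
      = (\<Sum>a\<in>E\<times>E. (case a of (p, q) \<Rightarrow> ell \<pi> p q) * pmf P a)"
    by (rule integral_measure_pmf_real) (use assms in auto)
  also have "\<dots> = (\<Sum>p\<in>E. \<Sum>q\<in>E. ell \<pi> p q * pmf P (p,q))"
    by (simp add: sum.cartesian_product split_beta)
  also have "\<dots> = (\<Sum>p\<in>E. Gf P E p (\<pi> p))"
    by (simp add: Gf_def ell_def mult.commute)
  finally show ?thesis .
qed

lemma cond_exp:
  assumes "finite E" "set_pmf P \<subseteq> E \<times> E" "p \<in> E" "pmf (map_pmf fst P) p > 0"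
  shows "measure_pmf.expectation (cond_second P p) (g :: _ \<Rightarrow> real)
     = (\<Sum>q\<in>E. pmf P (p,q) * g q) / pmf (map_pmf fst P) p"
proof -
  let ?S = "{pq. fst pq = p}"
  have ne: "set_pmf P \<inter> ?S \<noteq> {}"
  proof -
    have "p \<in> set_pmf (map_pmf fst P)" using assms(4) by (metis less_irrefl set_pmf_iff)
    thus ?thesis by force
  qed
  have mS: "measure_pmf.prob P ?S = pmf (map_pmf fst P) p"
    by (simp add: pmf_map vimage_def)
  have "measure_pmf.expectation (cond_second P p) g
      = measure_pmf.expectation (cond_pmf P ?S) (\<lambda>x. g (snd x))"
    by (simp add: cond_second_def)
  also have "\<dots> = (\<Sum>a\<in>{p}\<times>E. g (snd a) * pmf (cond_pmf P ?S) a)"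
    by (rule integral_measure_pmf_real) (use assms ne in auto)
  also have "\<dots> = (\<Sum>q\<in>E. g q * (pmf P (p,q) / pmf (map_pmf fst P) p))"
    proof -
      have "{p}\<times>E = (Pair p) ` E" by auto
      hence "(\<Sum>a\<in>{p}\<times>E. g (snd a) * pmf (cond_pmf P ?S) a)
           = (\<Sum>q\<in>E. g q * pmf (cond_pmf P ?S) (p,q))"
        by (simp add: sum.reindex inj_on_def)
      also have "\<dots> = (\<Sum>q\<in>E. g q * (pmf P (p,q) / pmf (map_pmf fst P) p))"
        by (simp add: pmf_cond[OF ne] mS)
      finally show ?thesis .
    qed
  also have "\<dots> = (\<Sum>q\<in>E. pmf P (p,q) * g q) / pmf (map_pmf fst P) p"
    by (simp add: sum_divide_distrib mult.commute)
  finally show ?thesis .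
qed

lemma Gf_cont:
  fixes E :: "(real^'n) set"
  assumes "finite E" "E \<subseteq> open_simplex" "p \<in> E"
  shows "continuous_on closed_simplex (Gf P E p)"
proof -
  have h: "\<forall>x\<in>closed_simplex. x \<bullet> vratio q p \<noteq> 0" if q: "q \<in> E" for q
  proof
    fix x :: "real^'n" assume x: "x \<in> closed_simplex"
    have "\<forall>i. 0 < vratio q p $ i" using vratio_pos[of p q] assms q by blast
    thus "x \<bullet> vratio q p \<noteq> 0" using pos_dot[of x "vratio q p"] x by force
  qed
  show ?thesis unfolding Gf_def
    by (intro continuous_on_sum continuous_on_mult continuous_on_const continuous_on_ln
         continuous_on_inner continuous_on_id h)
qed

theorem lemma3p2:
  fixes E :: "(real^'n) set" and \<mu> :: "nat \<Rightarrow> real^'n"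
    and P :: "((real^'n) \<times> (real^'n)) pmf"
  assumes n2: "CARD('n) \<ge> 2"
    and finE: "finite E" and E_sub: "E \<subseteq> open_simplex"
    and mu_E: "\<forall>t. \<mu> t \<in> E"
    and P_supp: "set_pmf P \<subseteq> E \<times> E"
    and conv: "weak_conv_on (E \<times> E) (\<lambda>t. emp_measure \<mu> (Suc t)) P"
  shows "(\<forall>\<pi>\<in>portfolio_maps E.
            (\<lambda>t. ln (rel_value \<pi> \<mu> t) / real t) \<longlonglongrightarrow>
               measure_pmf.expectation P (\<lambda>(p, q). ell \<pi> p q))
       \<and> (\<exists>\<pi>s\<in>portfolio_maps E. \<forall>\<pi>\<in>portfolio_maps E. growth \<pi> \<mu> \<le> growth \<pi>s \<mu>)
       \<and> (\<forall>\<pi>s\<in>portfolio_maps E. (\<forall>\<pi>\<in>portfolio_maps E. growth \<pi> \<mu> \<le> growth \<pi>s \<mu>) \<longrightarrow>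
            (\<forall>p\<in>E. pmf (map_pmf fst P) p > 0 \<longrightarrow>
               \<pi>s p \<in> closed_simplex \<and>
               (\<forall>x\<in>closed_simplex.
                  measure_pmf.expectation (cond_second P p) (\<lambda>q. ln (x \<bullet> vratio q p))
                  \<le> measure_pmf.expectation (cond_second P p) (\<lambda>q. ln (\<pi>s p \<bullet> vratio q p)))))"
proof -
  define F where "F \<pi> = measure_pmf.expectation P (\<lambda>(p, q). ell \<pi> p q)" for \<pi>
  have lim: "\<forall>\<pi>\<in>portfolio_maps E. (\<lambda>t. ln (rel_value \<pi> \<mu> t) / real t) \<longlonglongrightarrow> F \<pi>"
  proof
    fix \<pi> assume \<pi>: "\<pi> \<in> portfolio_maps E"
    let ?f = "\<lambda>(p, q). ell \<pi> p q"
    have c: "continuous_on (E \<times> E) ?f" by (rule continuous_on_finite) (use finE in auto)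
    have b: "bounded (?f ` (E \<times> E))" using finE by (simp add: finite_imp_bounded)
    have l: "(\<lambda>t. measure_pmf.expectation (emp_measure \<mu> (Suc t)) ?f) \<longlonglongrightarrow> F \<pi>"
      using conv c b unfolding weak_conv_on_def F_def by blast
    have e: "measure_pmf.expectation (emp_measure \<mu> (Suc t)) ?f
        = ln (rel_value \<pi> \<mu> (Suc t)) / real (Suc t)" for t
      using emp_exp[of \<mu> t ?f] rel_value_ln[OF \<pi> E_sub mu_E, of "Suc t"] by simp
    have "(\<lambda>t. ln (rel_value \<pi> \<mu> (Suc t)) / real (Suc t)) \<longlonglongrightarrow> F \<pi>"
      using l unfolding e .
    thus "(\<lambda>t. ln (rel_value \<pi> \<mu> t) / real t) \<longlonglongrightarrow> F \<pi>"
      by (rule LIMSEQ_imp_Suc)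
  qed
  have gr: "growth \<pi> \<mu> = F \<pi>" if "\<pi> \<in> portfolio_maps E" for \<pi>
    using lim that unfolding growth_def by (simp add: limI)
  have Fd: "F \<pi> = (\<Sum>p\<in>E. Gf P E p (\<pi> p))" for \<pi>
    unfolding F_def by (rule F_decomp[OF finE P_supp])
  have ex: "\<exists>x. x \<in> closed_simplex \<and> (\<forall>y\<in>closed_simplex. Gf P E p y \<le> Gf P E p x)"
    if "p \<in> E" for p
    using continuous_attains_sup[OF closed_simplex_compact closed_simplex_ne
        Gf_cont[OF finE E_sub that, of P]] by blast
  define \<pi>s where "\<pi>s = restrict (\<lambda>p. SOME x. x \<in> closed_simplex \<and>
       (\<forall>y\<in>closed_simplex. Gf P E p y \<le> Gf P E p x)) E"
  have \<pi>s_p: "\<pi>s p \<in> closed_simplex \<and> (\<forall>y\<in>closed_simplex. Gf P E p y \<le> Gf P E p (\<pi>s p))"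
    if "p \<in> E" for p
    using someI_ex[OF ex[OF that]] that unfolding \<pi>s_def by simp
  have \<pi>s_in: "\<pi>s \<in> portfolio_maps E"
    unfolding portfolio_maps_def PiE_iff using \<pi>s_p by (simp add: \<pi>s_def)
  have pin: "\<pi> p \<in> closed_simplex" if "\<pi> \<in> portfolio_maps E" "p \<in> E" for \<pi> p
    using that by (auto simp: portfolio_maps_def)
  have part2: "\<exists>\<pi>s\<in>portfolio_maps E. \<forall>\<pi>\<in>portfolio_maps E. growth \<pi> \<mu> \<le> growth \<pi>s \<mu>"
  proof (intro bexI ballI)
    fix \<pi> assume \<pi>: "\<pi> \<in> portfolio_maps E"
    have "F \<pi> \<le> F \<pi>s" unfolding Fd
      by (rule sum_mono) (use \<pi>s_p pin[OF \<pi>] in blast)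
    thus "growth \<pi> \<mu> \<le> growth \<pi>s \<mu>" using gr \<pi> \<pi>s_in by simp
  qed (rule \<pi>s_in)
  have part3: "\<forall>\<pi>s\<in>portfolio_maps E. (\<forall>\<pi>\<in>portfolio_maps E. growth \<pi> \<mu> \<le> growth \<pi>s \<mu>) \<longrightarrow>
            (\<forall>p\<in>E. pmf (map_pmf fst P) p > 0 \<longrightarrow>
               \<pi>s p \<in> closed_simplex \<and>
               (\<forall>x\<in>closed_simplex.
                  measure_pmf.expectation (cond_second P p) (\<lambda>q. ln (x \<bullet> vratio q p))
                  \<le> measure_pmf.expectation (cond_second P p) (\<lambda>q. ln (\<pi>s p \<bullet> vratio q p))))"
  proof (intro ballI impI conjI)
    fix \<sigma> p assume \<sigma>: "\<sigma> \<in> portfolio_maps E"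
      and mx: "\<forall>\<pi>\<in>portfolio_maps E. growth \<pi> \<mu> \<le> growth \<sigma> \<mu>"
      and p: "p \<in> E" and pos: "pmf (map_pmf fst P) p > 0"
    show "\<sigma> p \<in> closed_simplex" using pin[OF \<sigma> p] .
    fix x :: "real^'n" assume x: "x \<in> closed_simplex"
    have G: "Gf P E p x \<le> Gf P E p (\<sigma> p)"
    proof (rule ccontr)
      assume "\<not> ?thesis"
      hence lt: "Gf P E p (\<sigma> p) < Gf P E p x" by simp
      let ?\<pi> = "\<sigma>(p := x)"
      have in': "?\<pi> \<in> portfolio_maps E"
        using \<sigma> p x unfolding portfolio_maps_def PiE_iff extensional_def by auto
      have "F \<sigma> = Gf P E p (\<sigma> p) + (\<Sum>q\<in>E-{p}. Gf P E q (\<sigma> q))"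
        unfolding Fd using finE p by (simp add: sum.remove)
      moreover have "F ?\<pi> = Gf P E p x + (\<Sum>q\<in>E-{p}. Gf P E q (\<sigma> q))"
        unfolding Fd using finE p by (simp add: sum.remove)
      ultimately have "F \<sigma> < F ?\<pi>" using lt by simp
      thus False using mx in' gr \<sigma> by force
    qed
    show "measure_pmf.expectation (cond_second P p) (\<lambda>q. ln (x \<bullet> vratio q p))
          \<le> measure_pmf.expectation (cond_second P p) (\<lambda>q. ln (\<sigma> p \<bullet> vratio q p))"
      unfolding cond_exp[OF finE P_supp p pos]
      using G pos by (simp add: Gf_def divide_right_mono)
  qed
  show ?thesis using lim part2 part3 unfolding F_def by blast
qed

end
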